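(* Let $K$ be an algebraically closed field, let $f\colon\mathbb Z^k\to K$ be a hypergeometric term on $\mathbb Z^k$, and suppose $f$ is factorial on a region $\mathcal R\subset\mathbb Z^k$. Then there exist a vector $\boldsymbol\gamma=(\gamma_1,\dots,\gamma_k)\in K^k$, constants $m_1,\dots,m_p,n_1,\dots,n_q\in K$, vectors $\vec v_1,\dots,\vec v_p,\vec w_1,\dots,\vec w_q\in\mathbb Z^k$ and integers $r_1,\dots,r_p,s_1,\dots,s_q$ such that for all $\vec z\in\mathcal R$: (1) $f(\vec z)=\gamma_1^{z_1}\cdots\gamma_k^{z_k}\,\dfrac{\prod_{i=1}^p(m_i)_{\vec v_i\cdot\vec z+r_i}}{\prod_{j=1}^q(n_j)_{\vec w_j\cdot\vec z+s_j}}$; (2) $\vec v_i\cdot\vec z+r_i$ and $\vec w_j\cdot\vec z+s_j$ are positive integers for all $i\in\{1,\dots,p\}$, $j\in\{1,\dots,q\}$; (3) all the terms appearing in the numerator and denominator are nonzero.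
   Context: A hypergeometric term on $\mathbb Z^k$ over $K$ is a function $f\colon\mathbb Z^k\to K$ such that for each $i$ there are nonzero polynomials $A_i,B_i\in K[\vec z]$ with $A_i(\vec z)f(\vec z)=B_i(\vec z)f(\vec z+\vec e_i)$ for all $\vec z\in\mathbb Z^k$. $f$ is factorial on a region $\mathcal R\subset\mathbb Z^k$ if there exist a finite set $V\subset\mathbb Z^k$, and for each $\vec v\in V$ univariate polynomials $a_{\vec v},b_{\vec v}\in K[z]$ and an integer $n_{\vec v}$, such that for all $\vec z\in\mathcal R$: $f(\vec z)=\prod_{\vec v\in V}\prod_{j=1}^{\vec v\cdot\vec z+n_{\vec v}}a_{\vec v}(j)/b_{\vec v}(j)$; each $\vec v\cdot\vec z+n_{\vec v}$ is a positive integer; and $a_{\vec v}(j)\ne0$, $b_{\vec v}(j)\ne0$ for $1\le j\le\vec v\cdot\vec z+n_{\vec v}$. The Pochhammer symbol is $(m)_r=m(m+1)\cdots(m+r-1)$. *)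

theory Defs
  imports "HOL-Analysis.Analysis" "HOL-Computational_Algebra.Polynomial"
begin

definition alg_closed_field :: "'a::field itself \<Rightarrow> bool" where
  "alg_closed_field _ \<longleftrightarrow> (\<forall>p::'a poly. degree p > 0 \<longrightarrow> (\<exists>x. poly p x = 0))"

definition dotI :: "int^'k \<Rightarrow> int^'k \<Rightarrow> int" where
  "dotI v z = (\<Sum>i\<in>UNIV. v$i * z$i)"

text \<open>Multivariate polynomials in \<open>K[z_1,...,z_k]\<close> represented by their coefficient
  function on exponent vectors (finite support); evaluation at an integer point.\<close>
definition mpoly_coeffs :: "(nat^'k \<Rightarrow> 'a::field) \<Rightarrow> bool" where
  "mpoly_coeffs c \<longleftrightarrow> finite {\<alpha>. c \<alpha> \<noteq> 0}"

definition mpoly_nonzero :: "(nat^'k \<Rightarrow> 'a::field) \<Rightarrow> bool" where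
  "mpoly_nonzero c \<longleftrightarrow> (\<exists>\<alpha>. c \<alpha> \<noteq> 0)"

definition mpoly_eval :: "(nat^'k \<Rightarrow> 'a::field) \<Rightarrow> int^'k \<Rightarrow> 'a" where
  "mpoly_eval c z = (\<Sum>\<alpha>\<in>{\<alpha>. c \<alpha> \<noteq> 0}. c \<alpha> * (\<Prod>i\<in>UNIV. (of_int (z$i)) ^ (\<alpha>$i)))"

definition hypergeometric_term :: "(int^'k \<Rightarrow> 'a::field) \<Rightarrow> bool" where
  "hypergeometric_term f \<longleftrightarrow>
     (\<forall>i. \<exists>A B. mpoly_coeffs A \<and> mpoly_coeffs B \<and> mpoly_nonzero A \<and> mpoly_nonzero B \<and>
        (\<forall>z. mpoly_eval A z * f z = mpoly_eval B z * f (z + axis i 1)))"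

definition factorial_on :: "(int^'k \<Rightarrow> 'a::field) \<Rightarrow> (int^'k) set \<Rightarrow> bool" where
  "factorial_on f R \<longleftrightarrow>
     (\<exists>(V :: (int^'k) set) (a :: int^'k \<Rightarrow> 'a poly) (b :: int^'k \<Rightarrow> 'a poly) (n :: int^'k \<Rightarrow> int).
        finite V \<and>
        (\<forall>z\<in>R.
           f z = (\<Prod>v\<in>V. \<Prod>j=1..nat (dotI v z + n v).
                    poly (a v) (of_nat j) / poly (b v) (of_nat j)) \<and>
           (\<forall>v\<in>V. dotI v z + n v > 0 \<and>
              (\<forall>j\<in>{1..nat (dotI v z + n v)}.
                 poly (a v) (of_nat j) \<noteq> 0 \<and> poly (b v) (of_nat j) \<noteq> 0))))"

end

theory Submission
  imports Defs
begin

definition geo :: "'a^'k \<Rightarrow> int^'k \<Rightarrow> 'a::field" where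
  "geo \<gamma> z = (\<Prod>i\<in>UNIV. (\<gamma>$i) powi (z$i))"
definition pval :: "('a::field \<times> (int^'k) \<times> int) list \<Rightarrow> int^'k \<Rightarrow> 'a" where
  "pval xs z = (\<Prod>x\<leftarrow>xs. pochhammer (fst x) (nat (dotI (fst (snd x)) z + snd (snd x))))"
definition pok :: "('a::field \<times> (int^'k) \<times> int) list \<Rightarrow> int^'k \<Rightarrow> bool" where
  "pok xs z \<longleftrightarrow> (\<forall>x\<in>set xs. dotI (fst (snd x)) z + snd (snd x) > 0 \<and>
      (\<forall>l<nat (dotI (fst (snd x)) z + snd (snd x)). fst x + of_nat l \<noteq> 0))"
definition rep :: "(int^'k) set \<Rightarrow> (int^'k \<Rightarrow> 'a::field) \<Rightarrow> bool" where
  "rep R f \<longleftrightarrow> (\<exists>\<gamma> P Q. \<forall>z\<in>R. f z = geo \<gamma> z * pval P z / pval Q z \<and> pok P z \<and> pok Q z)"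

lemma rep_cong: "rep R f \<Longrightarrow> (\<And>z. z \<in> R \<Longrightarrow> g z = f z) \<Longrightarrow> rep R g"
  unfolding rep_def by metis

lemma rep_one: "rep R (\<lambda>z. 1)"
  unfolding rep_def
  by (rule exI[of _ "\<chi> i. 1"], rule exI[of _ "[]"], rule exI[of _ "[]"])
     (simp add: geo_def pval_def pok_def)

lemma geo_mult: "geo (\<chi> i. \<gamma>1$i * \<gamma>2$i) z = geo \<gamma>1 z * geo \<gamma>2 z"
  by (simp add: geo_def power_int_mult_distrib prod.distrib)

lemma geo_inv: "geo (\<chi> i. inverse (\<gamma>$i)) z = inverse (geo \<gamma> z)"
  using prod_inversef[of "\<lambda>i. \<gamma>$i powi z$i" UNIV] by (simp add: geo_def power_int_inverse o_def)

lemma pval_append: "pval (P1 @ P2) z = pval P1 z * pval P2 z"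
  by (simp add: pval_def)
lemma pok_append: "pok (P1 @ P2) z \<longleftrightarrow> pok P1 z \<and> pok P2 z"
  by (auto simp add: pok_def)

lemma rep_mult: assumes "rep R f" "rep R g" shows "rep R (\<lambda>z. f z * g z)"
proof -
  obtain g1 P1 Q1 where 1: "\<forall>z\<in>R. f z = geo g1 z * pval P1 z / pval Q1 z \<and> pok P1 z \<and> pok Q1 z"
    using assms(1) unfolding rep_def by blast
  obtain g2 P2 Q2 where 2: "\<forall>z\<in>R. g z = geo g2 z * pval P2 z / pval Q2 z \<and> pok P2 z \<and> pok Q2 z"
    using assms(2) unfolding rep_def by blast
  show ?thesis unfolding rep_def
    apply (rule exI[of _ "\<chi> i. g1$i * g2$i"], rule exI[of _ "P1 @ P2"], rule exI[of _ "Q1 @ Q2"])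
    using 1 2 by (auto simp: geo_mult pval_append pok_append)
qed

lemma rep_inverse: assumes "rep R f" shows "rep R (\<lambda>z. inverse (f z))"
proof -
  obtain g1 P1 Q1 where 1: "\<forall>z\<in>R. f z = geo g1 z * pval P1 z / pval Q1 z \<and> pok P1 z \<and> pok Q1 z"
    using assms(1) unfolding rep_def by blast
  show ?thesis unfolding rep_def
    apply (rule exI[of _ "\<chi> i. inverse (g1$i)"], rule exI[of _ "Q1"], rule exI[of _ "P1"])
    using 1 by (auto simp: geo_inv divide_inverse inverse_mult_distrib mult_ac)
qed

lemma rep_prod: assumes "finite V" "\<And>v. v \<in> V \<Longrightarrow> rep R (F v)"
  shows "rep R (\<lambda>z. \<Prod>v\<in>V. F v z)"
  using assms
proof (induction V rule: finite_induct)
  case empty then show ?case by (simp add: rep_one)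
next
  case (insert x F')
  then show ?case by (simp add: rep_mult)
qed

lemma dotI_0[simp]: "dotI 0 z = 0" by (simp add: dotI_def)

lemma rep_const: assumes "C \<noteq> 0" shows "rep R (\<lambda>z. C)"
  unfolding rep_def
  by (rule exI[of _ "\<chi> i. 1"], rule exI[of _ "[(C,0,1)]"], rule exI[of _ "[]"])
     (simp add: geo_def pval_def pok_def assms)

lemma rep_geo: "rep R (geo \<gamma>)"
  unfolding rep_def
  by (rule exI[of _ "\<gamma>"], rule exI[of _ "[]"], rule exI[of _ "[]"])
     (simp add: pval_def pok_def)

lemma rep_poch: assumes "\<And>z. z \<in> R \<Longrightarrow> dotI v z + r > 0 \<and> (\<forall>l<nat (dotI v z + r). m + of_nat l \<noteq> 0)"
  shows "rep R (\<lambda>z. pochhammer m (nat (dotI v z + r)))"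
  unfolding rep_def
  by (rule exI[of _ "\<chi> i. 1"], rule exI[of _ "[(m,v,r)]"], rule exI[of _ "[]"])
     (simp add: geo_def pval_def pok_def assms)

lemma power_int_sum: assumes "(c::'a::field) \<noteq> 0" "finite A" shows "c powi (\<Sum>i\<in>A. g i) = (\<Prod>i\<in>A. c powi g i)"
  using assms(2) by (induction A rule: finite_induct) (auto simp: power_int_add assms)

lemma rep_cpow: assumes "(c::'a::field) \<noteq> 0" shows "rep R (\<lambda>z. c powi (dotI v z + n))"
proof -
  have "rep R (\<lambda>z. (c powi n) * geo (\<chi> i. c powi (v$i)) z)"
    by (rule rep_mult[OF rep_const rep_geo]) (simp add: assms)
  moreover have "c powi (dotI v z + n) = (c powi n) * geo (\<chi> i. c powi (v$i)) z" for z
    using assms by (simp add: dotI_def geo_def power_int_add power_int_sum power_int_mult[symmetric] mult.commute)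
  ultimately show ?thesis by (rule rep_cong) 
qed

lemma poch_shift: "pochhammer (1 - x) N = (\<Prod>j=1..N. of_nat j - (x::'a::field))"
  by (induction N) (simp_all add: pochhammer_Suc algebra_simps prod.nat_ivl_Suc')

lemma rep_empty: "rep {} f" unfolding rep_def by simp

lemma rep_polyprod:
  assumes ac: "alg_closed_field TYPE('a::field)"
  shows "(\<forall>z\<in>R. dotI v z + n > 0 \<and> (\<forall>j\<in>{1..nat (dotI v z + n)}. poly a (of_nat j) \<noteq> (0::'a)))
     \<Longrightarrow> rep R (\<lambda>z. \<Prod>j=1..nat (dotI v z + n). poly a (of_nat j))"
proof (induction "degree a" arbitrary: a rule: less_induct)
  case less
  show ?case
  proof (cases "R = {}")
    case True then show ?thesis by (simp add: rep_empty)
  next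
    case False
    then obtain z0 where z0: "z0 \<in> R" by blast
    have a1: "poly a 1 \<noteq> 0" using less.prems z0 by force
    show ?thesis
    proof (cases "degree a = 0")
      case True
      then obtain c where ac': "a = [:c:]" using degree_eq_zeroE by blast
      have c0: "c \<noteq> 0" using a1 ac' by simp
      show ?thesis
      proof (rule rep_cong[OF rep_cpow[OF c0, of R v n]])
        fix z assume "z \<in> R"
        then have "dotI v z + n > 0" using less.prems by blast
        then show "(\<Prod>j=1..nat (dotI v z + n). poly a (of_nat j)) = c powi (dotI v z + n)"
          by (simp add: ac' power_int_def)
      qed
    next
      case False
      then obtain x where x: "poly a x = 0" using ac unfolding alg_closed_field_def by blast
      then obtain q where aq: "a = [:-x,1:] * q" using poly_eq_0_iff_dvd by (metis dvdE)
      have a0: "a \<noteq> 0" using False by auto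
      then have q0: "q \<noteq> 0" using aq by auto
      have dq: "degree q < degree a" proof -
        have "degree a = degree [:-x,1:] + degree q" unfolding aq by (rule degree_mult_eq) (use q0 in auto)
        then show ?thesis by simp
      qed
      have pa: "poly a t = (t - x) * poly q t" for t unfolding aq by (simp add: algebra_simps)
      have "rep R (\<lambda>z. \<Prod>j=1..nat (dotI v z + n). poly q (of_nat j))"
        using less.hyps[OF dq] less.prems pa by auto
      moreover have "rep R (\<lambda>z. pochhammer (1 - x) (nat (dotI v z + n)))"
      proof (rule rep_poch)
        fix z assume z: "z \<in> R"
        show "dotI v z + n > 0 \<and> (\<forall>l<nat (dotI v z + n). 1 - x + of_nat l \<noteq> 0)"
        proof (intro conjI allI impI)
          show "dotI v z + n > 0" using less.prems z by blast
          fix l assume l: "l < nat (dotI v z + n)"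
          then have "Suc l \<in> {1..nat (dotI v z + n)}" by auto
          then have "poly a (of_nat (Suc l)) \<noteq> 0" using less.prems z by blast
          then have "of_nat (Suc l) - x \<noteq> 0" using pa by auto
          then show "1 - x + of_nat l \<noteq> 0" by (simp add: algebra_simps)
        qed
      qed
      ultimately have "rep R (\<lambda>z. pochhammer (1 - x) (nat (dotI v z + n)) *
          (\<Prod>j=1..nat (dotI v z + n). poly q (of_nat j)))" using rep_mult by blast
      then show ?thesis
        by (rule rep_cong) (simp add: poch_shift pa prod.distrib)
    qed
  qed
qed

lemma prod_list_nth1: "(\<Prod>x\<leftarrow>xs. g x) = (\<Prod>i\<in>{1..length xs}. g (xs!(i-1)))"
proof -
  have "{1..length xs} = Suc ` {..<length xs}" by (simp add: image_Suc_lessThan)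
  then have "(\<Prod>i\<in>{1..length xs}. g (xs!(i-1))) = (\<Prod>i<length xs. g (xs!i))"
    by (simp add: prod.reindex)
  also have "\<dots> = (\<Prod>x\<leftarrow>xs. g x)"
    by (induction xs rule: rev_induct) (simp_all add: nth_append)
  finally show ?thesis by simp
qed

theorem lemmaB23:
  fixes f :: "int^'k \<Rightarrow> 'a::field" and R :: "(int^'k) set"
  assumes "alg_closed_field TYPE('a)"
    and "hypergeometric_term f"
    and "factorial_on f R"
  shows "\<exists>(\<gamma> :: 'a^'k) (p::nat) (q::nat) (m :: nat \<Rightarrow> 'a) (n :: nat \<Rightarrow> 'a)
           (v :: nat \<Rightarrow> int^'k) (w :: nat \<Rightarrow> int^'k) (r :: nat \<Rightarrow> int) (s :: nat \<Rightarrow> int).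
     \<forall>z\<in>R.
       f z = (\<Prod>i\<in>UNIV. (\<gamma>$i) powi (z$i)) *
             (\<Prod>i\<in>{1..p}. pochhammer (m i) (nat (dotI (v i) z + r i))) /
             (\<Prod>j\<in>{1..q}. pochhammer (n j) (nat (dotI (w j) z + s j))) \<and>
       (\<forall>i\<in>{1..p}. dotI (v i) z + r i > 0) \<and>
       (\<forall>j\<in>{1..q}. dotI (w j) z + s j > 0) \<and>
       (\<forall>i\<in>{1..p}. \<forall>l < nat (dotI (v i) z + r i). m i + of_nat l \<noteq> 0) \<and>
       (\<forall>j\<in>{1..q}. \<forall>l < nat (dotI (w j) z + s j). n j + of_nat l \<noteq> 0)"
proof -
  obtain V a b nn where V: "finite V" and
    H: "\<forall>z\<in>R. f z = (\<Prod>v\<in>V. \<Prod>j=1..nat (dotI v z + nn v).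
                    poly (a v) (of_nat j) / poly (b v) (of_nat j)) \<and>
           (\<forall>v\<in>V. dotI v z + nn v > 0 \<and>
              (\<forall>j\<in>{1..nat (dotI v z + nn v)}.
                 poly (a v) (of_nat j) \<noteq> 0 \<and> poly (b v) (of_nat j) \<noteq> 0))"
    using assms(3) unfolding factorial_on_def by blast
  have "rep R (\<lambda>z. \<Prod>v\<in>V. (\<Prod>j=1..nat (dotI v z + nn v). poly (a v) (of_nat j)) *
      inverse (\<Prod>j=1..nat (dotI v z + nn v). poly (b v) (of_nat j)))"
  proof (rule rep_prod[OF V])
    fix v assume v: "v \<in> V"
    show "rep R (\<lambda>z. (\<Prod>j=1..nat (dotI v z + nn v). poly (a v) (of_nat j)) *
      inverse (\<Prod>j=1..nat (dotI v z + nn v). poly (b v) (of_nat j)))"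
      apply (rule rep_mult)
       apply (rule rep_polyprod[OF assms(1)]) using H v apply blast
      apply (rule rep_inverse)
      apply (rule rep_polyprod[OF assms(1)]) using H v apply blast
      done
  qed
  note rp = this
  have pi: "(\<Prod>j\<in>A. x j * inverse (y j)) = prod x A * inverse (prod y A)"
    for A and x y :: "nat \<Rightarrow> 'a"
    using prod_inversef[of y A] by (simp add: prod.distrib o_def)
  have "rep R f"
    using rp by (rule rep_cong) (simp add: H divide_inverse pi)
  then obtain \<gamma> P Q where PQ: "\<forall>z\<in>R. f z = geo \<gamma> z * pval P z / pval Q z \<and> pok P z \<and> pok Q z"
    unfolding rep_def by blast
  show ?thesis
  proof (rule exI[of _ \<gamma>], rule exI[of _ "length P"], rule exI[of _ "length Q"],
     rule exI[of _ "\<lambda>i. fst (P!(i-1))"], rule exI[of _ "\<lambda>i. fst (Q!(i-1))"],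
     rule exI[of _ "\<lambda>i. fst (snd (P!(i-1)))"], rule exI[of _ "\<lambda>i. fst (snd (Q!(i-1)))"],
     rule exI[of _ "\<lambda>i. snd (snd (P!(i-1)))"], rule exI[of _ "\<lambda>i. snd (snd (Q!(i-1)))"],
     rule ballI, intro conjI)
    fix z assume z: "z \<in> R"
    show "f z = (\<Prod>i\<in>UNIV. (\<gamma>$i) powi (z$i)) *
             (\<Prod>i\<in>{1..length P}. pochhammer (fst (P!(i-1))) (nat (dotI (fst (snd (P!(i-1)))) z + snd (snd (P!(i-1)))))) /
             (\<Prod>j\<in>{1..length Q}. pochhammer (fst (Q!(j-1))) (nat (dotI (fst (snd (Q!(j-1)))) z + snd (snd (Q!(j-1))))))"
    proof -
      have "f z = geo \<gamma> z * pval P z / pval Q z" using PQ z by blast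
      then show ?thesis unfolding geo_def pval_def prod_list_nth1 .
    qed
    have okP: "pok P z" and okQ: "pok Q z" using PQ z by auto
    have mem: "i \<in> {1..length xs} \<Longrightarrow> xs!(i-1) \<in> set xs" for i and xs :: "('a \<times> (int^'k) \<times> int) list"
      by auto
    show "\<forall>i\<in>{1..length P}. dotI (fst (snd (P!(i-1)))) z + snd (snd (P!(i-1))) > 0"
    proof
      fix i assume "i \<in> {1..length P}"
      then have "P!(i-1) \<in> set P" by (rule mem)
      then show "dotI (fst (snd (P!(i-1)))) z + snd (snd (P!(i-1))) > 0" using okP unfolding pok_def by blast
    qed
    show "\<forall>i\<in>{1..length Q}. dotI (fst (snd (Q!(i-1)))) z + snd (snd (Q!(i-1))) > 0"
    proof
      fix i assume "i \<in> {1..length Q}"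
      then have "Q!(i-1) \<in> set Q" by (rule mem)
      then show "dotI (fst (snd (Q!(i-1)))) z + snd (snd (Q!(i-1))) > 0" using okQ unfolding pok_def by blast
    qed
    show "\<forall>i\<in>{1..length P}. \<forall>l < nat (dotI (fst (snd (P!(i-1)))) z + snd (snd (P!(i-1)))). fst (P!(i-1)) + of_nat l \<noteq> 0"
    proof (intro ballI allI impI)
      fix i l assume "i \<in> {1..length P}" "l < nat (dotI (fst (snd (P!(i-1)))) z + snd (snd (P!(i-1))))"
      moreover from this(1) have "P!(i-1) \<in> set P" by (rule mem)
      ultimately show "fst (P!(i-1)) + of_nat l \<noteq> 0" using okP unfolding pok_def by blast
    qed
    show "\<forall>i\<in>{1..length Q}. \<forall>l < nat (dotI (fst (snd (Q!(i-1)))) z + snd (snd (Q!(i-1)))). fst (Q!(i-1)) + of_nat l \<noteq> 0"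
    proof (intro ballI allI impI)
      fix i l assume "i \<in> {1..length Q}" "l < nat (dotI (fst (snd (Q!(i-1)))) z + snd (snd (Q!(i-1))))"
      moreover from this(1) have "Q!(i-1) \<in> set Q" by (rule mem)
      ultimately show "fst (Q!(i-1)) + of_nat l \<noteq> 0" using okQ unfolding pok_def by blast
    qed
  qed
qed

end
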